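(* For the erased fair coin flips source with erasure probability $\delta$ and any $(d_s,d_x)\in\mathcal D_2\cup\mathcal D_3$, for every blocklength $k$ and positive integer $M$ there exists a $(k,M,d_s,d_x,\epsilon)$ code such that \[\epsilon\le\sum_{t=0}^k\mathsf{binopmf}(t;k,\delta)\sum_{i=0}^t\mathsf{binopmf}(i;t,1/2)\Big(1-\mathsf{binocdf}\big(\min\{\lfloor kd_s\rfloor-i,\ \lfloor kd_x\rfloor-t\};k-t,1/2\big)\Big)^M.\]
   Context: Erased fair coin flips (EFCF): $S$ uniform on $\{0,1\}$; $X\in\{0,1,e\}$ equals $S$ with probability $1-\delta$ and $e$ with probability $\delta$; blocks $(S^k,X^k)$ have i.i.d. components. Reconstructions $z^k\in\{0,1\}^k$, $y^k\in\{0,1,e\}^k$ with normalized Hamming distortions $\mathsf d_s(s^k,z^k)=\frac1k\sum_i1\{s_i\ne z_i\}$, $\mathsf d_x(x^k,y^k)=\frac1k\sum_i1\{x_i\ne y_i\}$. A $(k,M,d_s,d_x,\epsilon)$ code is a random encoder $P_{U|X^k}$ into $\{1,\dots,M\}$ and a random decoder $P_{Z^kY^k|U}$ with $\mathbb P[\mathsf d_s(S^k,Z^k)>d_s\text{ or }\mathsf d_x(X^k,Y^k)>d_x]\le\epsilon$. Regions: $\mathcal D_2=\{2\delta\le d_x\le1/2+\delta/2,\ d_s\ge d_x-\delta/2\}$, $\mathcal D_3=\{d_x\ge d_s+\delta/2,\ \delta/2\le d_s\le1/2\}$. $\mathsf{binopmf}(\cdot;n,p)$ and $\mathsf{binocdf}(\cdot;n,p)$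 are the pmf and cdf of the Binomial$(n,p)$ distribution (cdf zero at negative arguments). *)

theory Defs
  imports "HOL-Probability.Probability"
begin

definition binopmf :: "nat \<Rightarrow> nat \<Rightarrow> real \<Rightarrow> real" where
  "binopmf t n p = real (n choose t) * p ^ t * (1 - p) ^ (n - t)"

definition binocdf :: "int \<Rightarrow> nat \<Rightarrow> real \<Rightarrow> real" where
  "binocdf x n p = (if x < 0 then 0 else (\<Sum>j\<le>nat x. binopmf j n p))"

definition hamming_dist :: "'a list \<Rightarrow> 'a list \<Rightarrow> real" where
  "hamming_dist xs ys = real (card {i. i < length xs \<and> xs ! i \<noteq> ys ! i}) / real (length xs)"

text \<open>Single letter of the erased fair coin flips source: (S, X), with X = None the erasure e.\<close>
definition efcf_pmf :: "real \<Rightarrow> (bool \<times> bool option) pmf" where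
  "efcf_pmf \<delta> = do { s \<leftarrow> pmf_of_set (UNIV :: bool set); er \<leftarrow> bernoulli_pmf \<delta>;
                    return_pmf (s, if er then None else Some s) }"

fun efcf_block :: "real \<Rightarrow> nat \<Rightarrow> (bool \<times> bool option) list pmf" where
  "efcf_block \<delta> 0 = return_pmf []"
| "efcf_block \<delta> (Suc k) = do { a \<leftarrow> efcf_pmf \<delta>; as \<leftarrow> efcf_block \<delta> k; return_pmf (a # as) }"

definition valid_code :: "nat \<Rightarrow> nat \<Rightarrow> (bool option list \<Rightarrow> nat pmf)
     \<Rightarrow> (nat \<Rightarrow> (bool list \<times> bool option list) pmf) \<Rightarrow> bool" where
  "valid_code k M enc dec \<longleftrightarrow>
     (\<forall>x. set_pmf (enc x) \<subseteq> {1..M}) \<and>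
     (\<forall>u z y. (z, y) \<in> set_pmf (dec u) \<longrightarrow> length z = k \<and> length y = k)"

definition excess_prob :: "real \<Rightarrow> nat \<Rightarrow> (bool option list \<Rightarrow> nat pmf)
     \<Rightarrow> (nat \<Rightarrow> (bool list \<times> bool option list) pmf) \<Rightarrow> real \<Rightarrow> real \<Rightarrow> real" where
  "excess_prob \<delta> k enc dec ds dx =
     measure_pmf.prob
       (do { sx \<leftarrow> efcf_block \<delta> k; u \<leftarrow> enc (map snd sx); zy \<leftarrow> dec u;
             return_pmf (map fst sx, map snd sx, fst zy, snd zy) })
       {(s, x, z, y). hamming_dist s z > ds \<or> hamming_dist x y > dx}"

definition is_code :: "real \<Rightarrow> nat \<Rightarrow> nat \<Rightarrow> real \<Rightarrow> real \<Rightarrow> real \<Rightarrow> bool" where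
  "is_code \<delta> k M ds dx \<epsilon> \<longleftrightarrow>
     (\<exists>enc dec. valid_code k M enc dec \<and> excess_prob \<delta> k enc dec ds dx \<le> \<epsilon>)"

definition D2 :: "real \<Rightarrow> (real \<times> real) set" where
  "D2 \<delta> = {(ds, dx). 2 * \<delta> \<le> dx \<and> dx \<le> 1/2 + \<delta>/2 \<and> ds \<ge> dx - \<delta>/2}"

definition D3 :: "real \<Rightarrow> (real \<times> real) set" where
  "D3 \<delta> = {(ds, dx). dx \<ge> ds + \<delta>/2 \<and> \<delta>/2 \<le> ds \<and> ds \<le> 1/2}"

end

theory Submission
  imports Defs
begin


lemma measure_bind_pmf_real:
  "measure_pmf.prob (bind_pmf M N) X = measure_pmf.expectation M (\<lambda>x. measure_pmf.prob (N x) X)"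
proof -
  have int: "integrable (measure_pmf M) (\<lambda>x. measure_pmf.prob (N x) X)"
    by (rule measure_pmf.integrable_const_bound[where B=1]) auto
  have "emeasure (measure_pmf (bind_pmf M N)) X = (\<integral>\<^sup>+x. emeasure (N x) X \<partial>M)"
    by (rule emeasure_bind_pmf)
  also have "\<dots> = (\<integral>\<^sup>+x. ennreal (measure_pmf.prob (N x) X) \<partial>M)"
    by (simp add: measure_pmf.emeasure_eq_measure)
  also have "\<dots> = ennreal (measure_pmf.expectation M (\<lambda>x. measure_pmf.prob (N x) X))"
    by (rule nn_integral_eq_integral[OF int]) auto
  finally show ?thesis
    by (simp add: measure_pmf.emeasure_eq_measure)
qed

lemma Pi_pmf_map_dep:
  assumes [simp]: "finite A" and "\<And>x. x \<notin> A \<Longrightarrow> f x dflt = dflt'"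
  shows   "Pi_pmf A dflt' (\<lambda>x. map_pmf (f x) (g x)) = map_pmf (\<lambda>h x. f x (h x)) (Pi_pmf A dflt g)"
proof -
  have "Pi_pmf A dflt' (\<lambda>x. map_pmf (f x) (g x)) =
          Pi_pmf A dflt' (\<lambda>x. g x \<bind> (\<lambda>y. return_pmf (f x y)))"
    using assms by (simp add: map_pmf_def)
  also have "\<dots> = Pi_pmf A dflt g \<bind> (\<lambda>h. return_pmf (\<lambda>x. if x \<in> A then f x (h x) else dflt'))"
   by (subst Pi_pmf_bind[where d' = dflt]) auto
  also have "\<dots> = map_pmf (\<lambda>h x. f x (h x)) (Pi_pmf A dflt g)"
    unfolding map_pmf_def using set_Pi_pmf_subset'[of A dflt g]
    by (intro bind_pmf_cong refl arg_cong[of _ _ return_pmf])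
       (auto dest: simp: fun_eq_iff PiE_dflt_def assms(2))
  finally show ?thesis .
qed

lemma exists_le_expectation:
  fixes f :: "'a \<Rightarrow> real"
  assumes fin: "finite (set_pmf R)" and b: "\<And>x. x \<in> set_pmf R \<Longrightarrow> \<bar>f x\<bar> \<le> 1"
  shows "\<exists>x\<in>set_pmf R. f x \<le> measure_pmf.expectation R f"
proof -
  have ne: "set_pmf R \<noteq> {}" by (rule set_pmf_not_empty)
  obtain x where x: "x \<in> set_pmf R" "\<And>y. y \<in> set_pmf R \<Longrightarrow> f x \<le> f y"
  proof -
    have "Min (f ` set_pmf R) \<in> f ` set_pmf R" using fin ne by (intro Min_in) auto
    then obtain x where "x \<in> set_pmf R" "f x = Min (f ` set_pmf R)" by auto
    moreover have "\<And>y. y \<in> set_pmf R \<Longrightarrow> Min (f ` set_pmf R) \<le> f y" using fin by (intro Min_le) auto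
    ultimately show ?thesis using that by metis
  qed
  have "f x = measure_pmf.expectation R (\<lambda>_. f x)" by simp
  also have "\<dots> \<le> measure_pmf.expectation R f"
  proof (rule integral_mono_AE)
    show "integrable (measure_pmf R) f"
      by (rule measure_pmf.integrable_const_bound[where B=1]) (auto simp: AE_measure_pmf_iff b)
    show "AE y in measure_pmf R. f x \<le> f y" using x by (auto simp: AE_measure_pmf_iff)
  qed simp
  finally show ?thesis using x by blast
qed




lemma prob_binomial_sum:
  assumes "p \<in> {0..1}"
  shows "measure_pmf.prob (binomial_pmf n p) {i. P i} = (\<Sum>i\<le>n. binopmf i n p * (if P i then 1 else 0))"
proof -
  have "measure_pmf.prob (binomial_pmf n p) {i. P i} = measure_pmf.prob (binomial_pmf n p) ({i. P i} \<inter> {..n})"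
    by (rule measure_prob_cong_0) (use assms in auto)
  also have "\<dots> = (\<Sum>i\<in>{i. P i} \<inter> {..n}. pmf (binomial_pmf n p) i)"
    by (rule measure_measure_pmf_finite) auto
  also have "\<dots> = (\<Sum>i\<le>n. binopmf i n p * (if P i then 1 else 0))"
    using assms by (simp add: sum.inter_filter[symmetric] Int_commute binopmf_def if_distrib cong: if_cong)
       (simp add: Collect_conj_eq Int_commute inf_left_commute atMost_def)
  finally show ?thesis .
qed

lemma prob_binomial_gt:
  "measure_pmf.prob (binomial_pmf n (1/2)) {j. int j > c} = 1 - binocdf c n (1/2)"
proof -
  have "{j. int j > c} = UNIV - {j. int j \<le> c}" by auto
  then have "measure_pmf.prob (binomial_pmf n (1/2)) {j. int j > c} = 1 - measure_pmf.prob (binomial_pmf n (1/2)) {j. int j \<le> c}"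
    using measure_pmf.prob_compl[of "{j. int j \<le> c}" "binomial_pmf n (1/2)"] by simp
  moreover have "measure_pmf.prob (binomial_pmf n (1/2)) {j. int j \<le> c} = binocdf c n (1/2)"
  proof (cases "c < 0")
    case True
    then have "{j. int j \<le> c} = {}" by auto
    then show ?thesis using True by (simp add: binocdf_def)
  next
    case False
    have "{j. int j \<le> c} = {..nat c}" using False by auto
    then have "measure_pmf.prob (binomial_pmf n (1/2)) {j. int j \<le> c} = (\<Sum>j\<le>nat c. pmf (binomial_pmf n (1/2)) j)"
      by (simp add: measure_measure_pmf_finite)
    then show ?thesis using False by (simp add: binocdf_def binopmf_def)
  qed
  ultimately show ?thesis by simp
qed

definition amin :: "nat \<Rightarrow> (nat \<Rightarrow> nat) \<Rightarrow> nat" where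
  "amin M g = (LEAST m. m < M \<and> (\<forall>m'<M. g m \<le> g m'))"

lemma amin:
  assumes "M > 0"
  shows "amin M g < M" "\<And>m'. m' < M \<Longrightarrow> g (amin M g) \<le> g m'"
proof -
  have "Min (g ` {..<M}) \<in> g ` {..<M}" using assms by (intro Min_in) auto
  then obtain m where m: "m < M" "g m = Min (g ` {..<M})" by auto
  have "\<forall>m'<M. g m \<le> g m'" using m by auto
  with m have ex: "\<exists>m. m < M \<and> (\<forall>m'<M. g m \<le> g m')" by blast
  show "amin M g < M" "\<And>m'. m' < M \<Longrightarrow> g (amin M g) \<le> g m'"
    using LeastI_ex[OF ex] unfolding amin_def by auto
qed

lemma binomial_card_Pi:
  assumes "finite E"
  shows "map_pmf (\<lambda>h. card {p\<in>E. h p}) (Pi_pmf E False (\<lambda>_. bernoulli_pmf (1/2))) = binomial_pmf (card E) (1/2)"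
  using binomial_pmf_altdef'[OF assms refl, of "1/2" False] by simp




lemma amin_cong: "(\<And>m. m < M \<Longrightarrow> g m = g' m) \<Longrightarrow> amin M g = amin M g'"
  unfolding amin_def by (intro arg_cong[where f=Least] ext) auto

lemma Pi_union_bind:
  assumes "finite E" "finite F" "E \<inter> F = {}"
  shows "Pi_pmf (E \<union> F) False (\<lambda>_. q) =
    bind_pmf (Pi_pmf F False (\<lambda>_. q)) (\<lambda>g. map_pmf (\<lambda>f x. if x \<in> E then f x else g x) (Pi_pmf E False (\<lambda>_. q)))"
  using assms
  by (subst Pi_pmf_union) (auto simp: pair_pmf_def map_bind_pmf map_pmf_def bind_assoc_pmf bind_return_pmf
      intro: bind_commute_pmf)

lemma expectation_ind: "measure_pmf.expectation R (\<lambda>G. if P G then 1 else 0) = measure_pmf.prob R {G. P G}"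
proof -
  have "(\<lambda>G. if P G then 1 else 0 :: real) = indicator {G. P G}" by (auto simp: indicator_def)
  then show ?thesis by simp
qed

lemma core:
  fixes E F :: "nat set" and M :: nat and a b :: int
  assumes fE: "finite E" and fF: "finite F" and disj: "E \<inter> F = {}" and M: "M > 0"
  shows "measure_pmf.prob (Pi_pmf {..<M} (\<lambda>_. False) (\<lambda>_. Pi_pmf (E \<union> F) False (\<lambda>_. bernoulli_pmf (1/2))))
     {B. int (card {p\<in>F. B (amin M (\<lambda>m. card {p\<in>F. B m p})) p}) >
          min (a - int (card {p\<in>E. B (amin M (\<lambda>m. card {p\<in>F. B m p})) p})) b}
   = (\<Sum>i\<le>card E. binopmf i (card E) (1/2) * (1 - binocdf (min (a - int i) b) (card F) (1/2)) ^ M)"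
  (is "measure_pmf.prob ?R ?Fail = ?rhs")
proof -
  define coin where "coin = bernoulli_pmf (1/2)"
  define W1 where "W1 = Pi_pmf F False (\<lambda>_. coin)"
  define W2 where "W2 = Pi_pmf E False (\<lambda>_. coin)"
  define d where "d = (\<lambda>_::nat. False)"
  define RG where "RG = Pi_pmf {..<M} d (\<lambda>_. W1)"
  define RH where "RH = Pi_pmf {..<M} d (\<lambda>_. W2)"
  define mg where "mg = (\<lambda>(G::nat \<Rightarrow> nat \<Rightarrow> bool) m (f::nat\<Rightarrow>bool) x. if x \<in> E then f x else G m x)"
  define J where "J = (\<lambda>g::nat\<Rightarrow>bool. card {p\<in>F. g p})"
  define m0 where "m0 = (\<lambda>G. amin M (\<lambda>m. J (G m)))"
  have R: "?R = bind_pmf RG (\<lambda>G. Pi_pmf {..<M} d (\<lambda>m. map_pmf (mg G m) W2))"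
    unfolding RG_def d_def mg_def W1_def W2_def coin_def
    by (subst Pi_union_bind[OF fE fF disj]) (rule Pi_pmf_bind, simp)
  have inner: "Pi_pmf {..<M} d (\<lambda>m. map_pmf (mg G m) W2) =
      map_pmf (\<lambda>H m. (if m < M then mg G m else id) (H m)) RH" for G
  proof -
    have "Pi_pmf {..<M} d (\<lambda>m. map_pmf (mg G m) W2) = Pi_pmf {..<M} d (\<lambda>m. map_pmf (if m < M then mg G m else id) W2)"
      by (rule Pi_pmf_cong) auto
    also have "\<dots> = map_pmf (\<lambda>H m. (if m < M then mg G m else id) (H m)) RH"
      unfolding RH_def by (rule Pi_pmf_map_dep) auto
    finally show ?thesis .
  qed
  have step: "measure_pmf.prob (Pi_pmf {..<M} d (\<lambda>m. map_pmf (mg G m) W2)) ?Fail =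
     (\<Sum>i\<le>card E. binopmf i (card E) (1/2) * (if int (J (G (m0 G))) > min (a - int i) b then 1 else 0))" for G
  proof -
    have m0: "m0 G < M" using amin(1)[OF M] unfolding m0_def by blast
    have pre: "(\<lambda>H m. (if m < M then mg G m else id) (H m)) -` ?Fail =
        {H. int (J (G (m0 G))) > min (a - int (card {p\<in>E. H (m0 G) p})) b}"
    proof -
      have JJ: "card {p\<in>F. (if m < M then mg G m else id) (H m) p} = J (G m)" if "m < M" for H m
        using that disj unfolding mg_def J_def by (intro arg_cong[where f=card]) auto
      have am: "amin M (\<lambda>m. card {p\<in>F. (if m < M then mg G m else id) (H m) p}) = m0 G" for H
        unfolding m0_def by (rule amin_cong) (metis JJ)
      have EE: "card {p\<in>E. (if m0 G < M then mg G (m0 G) else id) (H (m0 G)) p} = card {p\<in>E. H (m0 G) p}" for H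
        using m0 unfolding mg_def by (simp add: conj_commute cong: conj_cong)
      show ?thesis using JJ[OF m0] EE by (auto simp: am)
    qed
    have "measure_pmf.prob (Pi_pmf {..<M} d (\<lambda>m. map_pmf (mg G m) W2)) ?Fail =
        measure_pmf.prob RH {H. int (J (G (m0 G))) > min (a - int (card {p\<in>E. H (m0 G) p})) b}"
      by (simp only: inner measure_map_pmf pre)
    also have "\<dots> = measure_pmf.prob (map_pmf (\<lambda>h. card {p\<in>E. h p}) (map_pmf (\<lambda>H. H (m0 G)) RH))
          {i. int (J (G (m0 G))) > min (a - int i) b}"
      by (simp add: vimage_def)
    also have "map_pmf (\<lambda>H. H (m0 G)) RH = W2"
      unfolding RH_def using m0 by (subst Pi_pmf_component) auto
    also have "map_pmf (\<lambda>h. card {p\<in>E. h p}) W2 = binomial_pmf (card E) (1/2)"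
      unfolding W2_def coin_def by (rule binomial_card_Pi[OF fE])
    also have "measure_pmf.prob (binomial_pmf (card E) (1/2)) {i. int (J (G (m0 G))) > min (a - int i) b} =
       (\<Sum>i\<le>card E. binopmf i (card E) (1/2) * (if int (J (G (m0 G))) > min (a - int i) b then 1 else 0))"
      by (rule prob_binomial_sum) auto
    finally show ?thesis .
  qed
  have gt: "measure_pmf.prob RG {G. int (J (G (m0 G))) > c} = (1 - binocdf c (card F) (1/2)) ^ M" for c
  proof -
    have "{G. int (J (G (m0 G))) > c} = Pi {..<M} (\<lambda>_. {g. int (J g) > c})"
    proof (intro set_eqI iffI)
      fix G assume "G \<in> {G. int (J (G (m0 G))) > c}"
      then show "G \<in> Pi {..<M} (\<lambda>_. {g. int (J g) > c})"
        using amin(2)[OF M, where g="\<lambda>m. J (G m)"] unfolding m0_def by force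
    next
      fix G assume "G \<in> Pi {..<M} (\<lambda>_. {g. int (J g) > c})"
      then show "G \<in> {G. int (J (G (m0 G))) > c}"
        using amin(1)[OF M, where g="\<lambda>m. J (G m)"] unfolding m0_def by auto
    qed
    then have "measure_pmf.prob RG {G. int (J (G (m0 G))) > c} = (\<Prod>m<M. measure_pmf.prob W1 {g. int (J g) > c})"
      unfolding RG_def by (simp add: measure_Pi_pmf_Pi)
    also have "measure_pmf.prob W1 {g. int (J g) > c} =
        measure_pmf.prob (map_pmf (\<lambda>h. card {p\<in>F. h p}) W1) {j. int j > c}"
      by (simp add: J_def vimage_def)
    also have "map_pmf (\<lambda>h. card {p\<in>F. h p}) W1 = binomial_pmf (card F) (1/2)"
      unfolding W1_def coin_def by (rule binomial_card_Pi[OF fF])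
    finally show ?thesis by (simp add: prob_binomial_gt)
  qed
  have "measure_pmf.prob ?R ?Fail = measure_pmf.expectation RG
     (\<lambda>G. \<Sum>i\<le>card E. binopmf i (card E) (1/2) * (if int (J (G (m0 G))) > min (a - int i) b then 1 else 0))"
    by (simp add: R measure_bind_pmf_real step)
  also have "\<dots> = (\<Sum>i\<le>card E. binopmf i (card E) (1/2) *
       measure_pmf.expectation RG (\<lambda>G. if int (J (G (m0 G))) > min (a - int i) b then 1 else 0))"
    by (subst Bochner_Integration.integral_sum)
       (auto intro!: measure_pmf.integrable_const_bound[where B=1] sum.cong)
  also have "\<dots> = ?rhs"
    by (simp add: expectation_ind gt)
  finally show ?thesis .
qed




lemma map_Not_coin: "map_pmf Not (bernoulli_pmf (1/2)) = bernoulli_pmf (1/2)"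
proof (rule pmf_eqI)
  fix x
  have "Not -` {x} = {\<not>x}" by auto
  then show "pmf (map_pmf Not (bernoulli_pmf (1/2))) x = pmf (bernoulli_pmf (1/2)) x"
    by (simp add: pmf_map measure_pmf_single)
qed

definition xw :: "nat \<Rightarrow> (nat \<Rightarrow> bool) \<Rightarrow> (nat \<Rightarrow> bool) \<Rightarrow> nat \<Rightarrow> bool" where
  "xw k s w = (\<lambda>p. if p < k \<and> s p then \<not> w p else w p)"

definition XC :: "nat \<Rightarrow> nat \<Rightarrow> (nat \<Rightarrow> bool) \<Rightarrow> (nat \<Rightarrow> nat \<Rightarrow> bool) \<Rightarrow> nat \<Rightarrow> nat \<Rightarrow> bool" where
  "XC k M s C = (\<lambda>m. if m < M then xw k s (C m) else C m)"

definition cbW :: "nat \<Rightarrow> (nat \<Rightarrow> bool) pmf" where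
  "cbW k = Pi_pmf {..<k} False (\<lambda>_. bernoulli_pmf (1/2))"

definition cbR :: "nat \<Rightarrow> nat \<Rightarrow> (nat \<Rightarrow> nat \<Rightarrow> bool) pmf" where
  "cbR k M = Pi_pmf {..<M} (\<lambda>_. False) (\<lambda>_. cbW k)"

lemma map_xw: "map_pmf (xw k s) (cbW k) = cbW k"
proof -
  have "Pi_pmf {..<k} False (\<lambda>p. map_pmf (\<lambda>b. if p < k \<and> s p then \<not> b else b) (bernoulli_pmf (1/2))) =
     map_pmf (\<lambda>h p. (if p < k \<and> s p then \<not> h p else h p)) (cbW k)"
    unfolding cbW_def by (rule Pi_pmf_map_dep) auto
  moreover have "Pi_pmf {..<k} False (\<lambda>p. map_pmf (\<lambda>b. if p < k \<and> s p then \<not> b else b) (bernoulli_pmf (1/2))) = cbW k"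
  proof -
    have "map_pmf (\<lambda>b. if p < k \<and> s p then \<not> b else b) (bernoulli_pmf (1/2)) = bernoulli_pmf (1/2)" for p
    proof (cases "p < k \<and> s p")
      case True
      then show ?thesis using map_Not_coin by (simp add: eta_contract_eq)
    next
      case False
      then have "(\<lambda>b. if p < k \<and> s p then \<not> b else b) = (\<lambda>b. b)" by auto
      then show ?thesis by (simp add: pmf.map_ident)
    qed
    then show ?thesis unfolding cbW_def by (intro Pi_pmf_cong) (simp_all only:)
  qed
  ultimately show ?thesis unfolding xw_def by simp
qed

lemma map_XC: "map_pmf (XC k M s) (cbR k M) = cbR k M"
proof -
  have "Pi_pmf {..<M} (\<lambda>_. False) (\<lambda>m. map_pmf (if m < M then xw k s else id) (cbW k)) =
     map_pmf (\<lambda>h m. (if m < M then xw k s else id) (h m)) (cbR k M)"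
    unfolding cbR_def by (rule Pi_pmf_map_dep) auto
  moreover have "Pi_pmf {..<M} (\<lambda>_. False) (\<lambda>m. map_pmf (if m < M then xw k s else id) (cbW k)) = cbR k M"
    unfolding cbR_def by (rule Pi_pmf_cong) (auto simp: map_xw)
  moreover have "(\<lambda>h m. (if m < M then xw k s else id) (h m)) = XC k M s"
    unfolding XC_def by (auto simp: fun_eq_iff)
  ultimately show ?thesis by simp
qed

lemma finite_set_cbR: "finite (set_pmf (cbR k M))"
proof -
  have "set_pmf (cbW k) \<subseteq> PiE_dflt {..<k} False (set_pmf \<circ> (\<lambda>_. bernoulli_pmf (1/2)))"
    unfolding cbW_def by (rule set_Pi_pmf_subset') auto
  moreover have "finite (PiE_dflt {..<k} False (set_pmf \<circ> (\<lambda>_. bernoulli_pmf (1/2))))"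
    by (rule finite_PiE_dflt) auto
  ultimately have fW: "finite (set_pmf (cbW k))" by (rule finite_subset)
  have "set_pmf (cbR k M) \<subseteq> PiE_dflt {..<M} (\<lambda>_. False) (set_pmf \<circ> (\<lambda>_. cbW k))"
    unfolding cbR_def by (rule set_Pi_pmf_subset') auto
  moreover have "finite (PiE_dflt {..<M} (\<lambda>_. False) (set_pmf \<circ> (\<lambda>_. cbW k)))"
    using fW by (intro finite_PiE_dflt) auto
  ultimately show ?thesis by (rule finite_subset)
qed

definition wf_sx :: "nat \<Rightarrow> (bool \<times> bool option) list \<Rightarrow> bool" where
  "wf_sx k sx \<longleftrightarrow> length sx = k \<and> (\<forall>a\<in>set sx. snd a = None \<or> snd a = Some (fst a))"

lemma set_efcf_block: "sx \<in> set_pmf (efcf_block \<delta> k) \<Longrightarrow> wf_sx k sx"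
proof (induction k arbitrary: sx)
  case 0
  then show ?case by (simp add: wf_sx_def)
next
  case (Suc k)
  then obtain a as where sx: "sx = a # as" "a \<in> set_pmf (efcf_pmf \<delta>)" "as \<in> set_pmf (efcf_block \<delta> k)"
    by (auto simp: set_bind_pmf)
  have "snd a = None \<or> snd a = Some (fst a)" using sx(2) by (auto simp: efcf_pmf_def set_bind_pmf split: if_splits)
  with Suc.IH[OF sx(3)] show ?case by (simp add: wf_sx_def sx(1))
qed

definition tcount :: "(bool \<times> bool option) list \<Rightarrow> nat" where
  "tcount sx = length (filter (\<lambda>a. snd a = None) sx)"

lemma map_efcf_pmf: "0 \<le> \<delta> \<Longrightarrow> \<delta> \<le> 1 \<Longrightarrow> map_pmf (\<lambda>a. snd a = None) (efcf_pmf \<delta>) = bernoulli_pmf \<delta>"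
proof -
  have "map_pmf (\<lambda>a. snd a = None) (efcf_pmf \<delta>) =
     bind_pmf (pmf_of_set (UNIV :: bool set)) (\<lambda>s. bind_pmf (bernoulli_pmf \<delta>) (\<lambda>er. return_pmf er))"
    unfolding efcf_pmf_def map_bind_pmf by (intro bind_pmf_cong refl) auto
  then show ?thesis by (simp add: bind_return_pmf')
qed

lemma map_tcount: 
  assumes "0 \<le> \<delta>" "\<delta> \<le> 1"
  shows "map_pmf tcount (efcf_block \<delta> k) = binomial_pmf k \<delta>"
proof (induction k)
  case 0
  then show ?case using assms by (simp add: tcount_def binomial_pmf_0)
next
  case (Suc k)
  have "map_pmf tcount (efcf_block \<delta> (Suc k)) =
     do {a \<leftarrow> efcf_pmf \<delta>; n \<leftarrow> map_pmf tcount (efcf_block \<delta> k); return_pmf ((if snd a = None then 1 else 0) + n)}"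
    apply (simp add: map_bind_pmf bind_map_pmf tcount_def)
    apply (intro bind_pmf_cong refl)
    apply simp
    done
  also have "\<dots> = do {b \<leftarrow> map_pmf (\<lambda>a. snd a = None) (efcf_pmf \<delta>); n \<leftarrow> binomial_pmf k \<delta>; return_pmf ((if b then 1 else 0) + n)}"
    by (simp add: Suc bind_map_pmf)
  also have "\<dots> = binomial_pmf (Suc k) \<delta>"
    using assms by (simp add: map_efcf_pmf binomial_pmf_Suc)
  finally show ?case .
qed




definition wl :: "nat \<Rightarrow> (nat \<Rightarrow> bool) \<Rightarrow> bool list" where
  "wl k w = map w [0..<k]"

definition Jc :: "nat \<Rightarrow> bool option list \<Rightarrow> (nat \<Rightarrow> bool) \<Rightarrow> nat" where
  "Jc k x w = card {p. p < k \<and> x ! p \<noteq> None \<and> x ! p \<noteq> Some (w p)}"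

definition mstar :: "nat \<Rightarrow> nat \<Rightarrow> (nat \<Rightarrow> nat \<Rightarrow> bool) \<Rightarrow> bool option list \<Rightarrow> nat" where
  "mstar k M C x = amin M (\<lambda>m. Jc k x (C m))"

definition encC :: "nat \<Rightarrow> nat \<Rightarrow> (nat \<Rightarrow> nat \<Rightarrow> bool) \<Rightarrow> bool option list \<Rightarrow> nat pmf" where
  "encC k M C = (\<lambda>x. return_pmf (Suc (mstar k M C x)))"

definition decC :: "nat \<Rightarrow> (nat \<Rightarrow> nat \<Rightarrow> bool) \<Rightarrow> nat \<Rightarrow> (bool list \<times> bool option list) pmf" where
  "decC k C = (\<lambda>u. return_pmf (wl k (C (u - 1)), map Some (wl k (C (u - 1)))))"

definition failC :: "nat \<Rightarrow> nat \<Rightarrow> real \<Rightarrow> real \<Rightarrow> (nat \<Rightarrow> nat \<Rightarrow> bool) \<Rightarrow> (bool \<times> bool option) list \<Rightarrow> bool" where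
  "failC k M ds dx C sx = (hamming_dist (map fst sx) (wl k (C (mstar k M C (map snd sx)))) > ds \<or>
      hamming_dist (map snd sx) (map Some (wl k (C (mstar k M C (map snd sx))))) > dx)"

lemma valid_encdec: "M > 0 \<Longrightarrow> valid_code k M (encC k M C) (decC k C)"
  using amin(1)[of M] by (auto simp: valid_code_def encC_def decC_def mstar_def wl_def Suc_leI)

lemma excess_eq:
  "excess_prob \<delta> k (encC k M C) (decC k C) ds dx = measure_pmf.prob (efcf_block \<delta> k) {sx. failC k M ds dx C sx}"
proof -
  have "(do { sx \<leftarrow> efcf_block \<delta> k; u \<leftarrow> encC k M C (map snd sx); zy \<leftarrow> decC k C u;
             return_pmf (map fst sx, map snd sx, fst zy, snd zy) }) =
     map_pmf (\<lambda>sx. (map fst sx, map snd sx, wl k (C (mstar k M C (map snd sx))),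
        map Some (wl k (C (mstar k M C (map snd sx)))))) (efcf_block \<delta> k)"
    by (simp add: encC_def decC_def bind_return_pmf map_pmf_def)
  then show ?thesis
    unfolding excess_prob_def by (simp add: vimage_def failC_def)
qed

lemma div_gt_floor:
  assumes "n \<le> k" "y \<ge> 0"
  shows "(real n / real k > y) \<longleftrightarrow> int n > \<lfloor>real k * y\<rfloor>"
proof (cases "k = 0")
  case True
  then show ?thesis using assms by simp
next
  case False
  then have "(real n / real k > y) \<longleftrightarrow> real n > real k * y"
    by (simp add: pos_less_divide_eq mult.commute)
  also have "\<dots> \<longleftrightarrow> int n > \<lfloor>real k * y\<rfloor>"
    by (metis floor_less_iff of_int_of_nat_eq)
  finally show ?thesis .
qed

lemma fail_iff:
  assumes wf: "wf_sx k sx" and ds: "ds \<ge> 0" and dx: "dx \<ge> 0" and M: "M > 0"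
  defines "s' \<equiv> (\<lambda>p. p < k \<and> fst (sx ! p))"
  defines "E \<equiv> {p. p < k \<and> snd (sx ! p) = None}"
  defines "F \<equiv> {p. p < k \<and> snd (sx ! p) \<noteq> None}"
  shows "failC k M ds dx C sx \<longleftrightarrow>
     (let B = XC k M s' C in
      int (card {p\<in>F. B (amin M (\<lambda>m. card {p\<in>F. B m p})) p}) >
          min (\<lfloor>real k * ds\<rfloor> - int (card {p\<in>E. B (amin M (\<lambda>m. card {p\<in>F. B m p})) p}))
              (\<lfloor>real k * dx\<rfloor> - int (card E)))"
proof -
  have len: "length sx = k" using wf by (simp add: wf_sx_def)
  have sn: "snd (sx ! p) = None \<or> snd (sx ! p) = Some (fst (sx ! p))" if "p < k" for p
    using wf that len nth_mem by (fastforce simp: wf_sx_def)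
 have sn': "snd (sx ! p) = Some (fst (sx ! p))" if "p < k" "snd (sx ! p) \<noteq> None" for p
    using sn[OF that(1)] that(2) by blast
  have fin: "finite E" "finite F" unfolding E_def F_def by auto
  have vv: "xw k s' w p \<longleftrightarrow> w p \<noteq> fst (sx ! p)" if "p < k" for w p
    using that unfolding xw_def s'_def by auto
  have h1: "Jc k (map snd sx) w = card {p\<in>F. xw k s' w p}" for w
    unfolding Jc_def F_def
    apply (intro arg_cong[where f=card] set_eqI)
    subgoal for p using sn[of p] by (cases "p < k") (auto simp: vv len)
    done
  have h2a: "{p. p < k \<and> xw k s' w p} = {p\<in>E. xw k s' w p} \<union> {p\<in>F. xw k s' w p}" for w
    unfolding E_def F_def by auto
  have h2b: "card {p. p < k \<and> xw k s' w p} = card {p\<in>E. xw k s' w p} + card {p\<in>F. xw k s' w p}" for w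
    unfolding h2a by (rule card_Un_disjoint) (auto simp: E_def F_def)
  have h2: "hamming_dist (map fst sx) (wl k w) = real (card {p. p < k \<and> xw k s' w p}) / real k" for w
    unfolding hamming_dist_def wl_def
    apply (simp add: len)
    apply (rule disjI2)
    apply (intro arg_cong[where f=card] set_eqI)
    apply (auto simp: vv len)
    done
  have h3a: "{i. i < k \<and> snd (sx ! i) \<noteq> Some (w i)} = E \<union> {p\<in>F. xw k s' w p}" for w
    unfolding E_def F_def
    apply (intro set_eqI)
    subgoal for p using sn[of p] by (cases "p < k") (auto simp: vv len)
    done
  have h3b: "card (E \<union> {p\<in>F. xw k s' w p}) = card E + card {p\<in>F. xw k s' w p}" for w
    by (rule card_Un_disjoint) (auto simp: E_def F_def)
  have h3: "hamming_dist (map snd sx) (map Some (wl k w)) = real (card (E \<union> {p\<in>F. xw k s' w p})) / real k" for w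
    unfolding hamming_dist_def wl_def using len h3a[of w] by (simp cong: conj_cong)
  have b1: "card {p. p < k \<and> xw k s' w p} \<le> k" for w
    using card_mono[of "{..<k}" "{p. p < k \<and> xw k s' w p}"] by auto
  have b2: "card (E \<union> {p\<in>F. xw k s' w p}) \<le> k" for w
    using card_mono[of "{..<k}" "E \<union> {p\<in>F. xw k s' w p}"] by (auto simp: E_def F_def)
  define B where "B = XC k M s' C"
  define m0 where "m0 = amin M (\<lambda>m. card {p\<in>F. B m p})"
  have m0M: "m0 < M" unfolding m0_def using amin(1)[OF M] by blast
  have ms: "mstar k M C (map snd sx) = m0"
    unfolding mstar_def m0_def by (rule amin_cong) (simp add: h1 B_def XC_def)
  have Bm0: "B m0 = xw k s' (C m0)" using m0M by (simp add: B_def XC_def)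
  show ?thesis
    unfolding failC_def ms h2 h3 Let_def B_def[symmetric] m0_def[symmetric] Bm0
    using div_gt_floor[OF b1 ds, of "C m0"] div_gt_floor[OF b2 dx, of "C m0"] h2b[of "C m0"] h3b[of "C m0"]
    by linarith
qed




lemma prob_fix_sx:
  assumes sx: "sx \<in> set_pmf (efcf_block \<delta> k)" and ds: "ds \<ge> 0" and dx: "dx \<ge> 0" and M: "M > 0"
  shows "measure_pmf.prob (cbR k M) {C. failC k M ds dx C sx} =
    (\<Sum>i=0..tcount sx. binopmf i (tcount sx) (1/2) *
       (1 - binocdf (min (\<lfloor>real k * ds\<rfloor> - int i) (\<lfloor>real k * dx\<rfloor> - int (tcount sx))) (k - tcount sx) (1/2)) ^ M)"
proof -
  have wf: "wf_sx k sx" by (rule set_efcf_block[OF sx])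
  have len: "length sx = k" using wf by (simp add: wf_sx_def)
  define s' where "s' = (\<lambda>p. p < k \<and> fst (sx ! p))"
  define E where "E = {p. p < k \<and> snd (sx ! p) = None}"
  define F where "F = {p. p < k \<and> snd (sx ! p) \<noteq> None}"
  define a where "a = \<lfloor>real k * ds\<rfloor>"
  define b where "b = \<lfloor>real k * dx\<rfloor> - int (card E)"
  define P where "P = (\<lambda>B. int (card {p\<in>F. B (amin M (\<lambda>m. card {p\<in>F. B m p})) p}) >
          min (a - int (card {p\<in>E. B (amin M (\<lambda>m. card {p\<in>F. B m p})) p})) b)"
  have fin: "finite E" "finite F" unfolding E_def F_def by auto
  have disj: "E \<inter> F = {}" and un: "E \<union> F = {..<k}" unfolding E_def F_def by auto
  have cE: "card E = tcount sx"
    unfolding tcount_def length_filter_conv_card E_def len ..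
  have cF: "card F = k - tcount sx"
  proof -
    have "card E + card F = k" using card_Un_disjoint[OF fin disj] un by simp
    then show ?thesis using cE by simp
  qed
  have "{C. failC k M ds dx C sx} = XC k M s' -` {B. P B}"
    using fail_iff[OF wf ds dx M] unfolding P_def s'_def E_def F_def a_def b_def by (auto simp: Let_def)
  then have "measure_pmf.prob (cbR k M) {C. failC k M ds dx C sx} = measure_pmf.prob (map_pmf (XC k M s') (cbR k M)) {B. P B}"
    by simp
  also have "\<dots> = measure_pmf.prob (cbR k M) {B. P B}" by (simp add: map_XC)
  also have "\<dots> = (\<Sum>i\<le>card E. binopmf i (card E) (1/2) * (1 - binocdf (min (a - int i) b) (card F) (1/2)) ^ M)"
    unfolding cbR_def cbW_def P_def un[symmetric] by (rule core[OF fin disj M])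
  finally show ?thesis by (simp add: cE cF b_def a_def atLeast0AtMost)
qed

theorem theorem7:
  fixes \<delta> ds dx :: real and k M :: nat
  assumes "0 \<le> \<delta>" "\<delta> \<le> 1"
    and "(ds, dx) \<in> D2 \<delta> \<union> D3 \<delta>"
    and "M > 0"
  shows "is_code \<delta> k M ds dx
    (\<Sum>t=0..k. binopmf t k \<delta> * (\<Sum>i=0..t. binopmf i t (1/2) *
       (1 - binocdf (min (\<lfloor>real k * ds\<rfloor> - int i) (\<lfloor>real k * dx\<rfloor> - int t)) (k - t) (1/2)) ^ M))"
proof -
  have ds: "ds \<ge> 0" and dx: "dx \<ge> 0" using assms(1,3) by (auto simp: D2_def D3_def)
  define Gt where "Gt = (\<lambda>t. \<Sum>i=0..t. binopmf i t (1/2) *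
       (1 - binocdf (min (\<lfloor>real k * ds\<rfloor> - int i) (\<lfloor>real k * dx\<rfloor> - int t)) (k - t) (1/2)) ^ M)"
  define R where "R = cbR k M"
  define EF where "EF = efcf_block \<delta> k"
  define ex where "ex = (\<lambda>C. excess_prob \<delta> k (encC k M C) (decC k C) ds dx)"
  have ex: "ex C = measure_pmf.prob EF {sx. failC k M ds dx C sx}" for C
    unfolding ex_def EF_def by (rule excess_eq)
  have "measure_pmf.expectation R ex =
     measure_pmf.expectation R (\<lambda>C. measure_pmf.prob (map_pmf (\<lambda>sx. (C, sx)) EF) {(C, sx). failC k M ds dx C sx})"
  proof -
    have "ex = (\<lambda>C. measure_pmf.prob EF {sx. failC k M ds dx C sx})" by (rule ext) (rule ex)
    then show ?thesis by (simp add: vimage_def)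
  qed
  also have "\<dots> = measure_pmf.prob (bind_pmf R (\<lambda>C. map_pmf (\<lambda>sx. (C, sx)) EF)) {(C, sx). failC k M ds dx C sx}"
    by (rule measure_bind_pmf_real[symmetric])
  also have "bind_pmf R (\<lambda>C. map_pmf (\<lambda>sx. (C, sx)) EF) = bind_pmf EF (\<lambda>sx. map_pmf (\<lambda>C. (C, sx)) R)"
    unfolding map_pmf_def by (rule bind_commute_pmf)
  also have "measure_pmf.prob \<dots> {(C, sx). failC k M ds dx C sx} =
      measure_pmf.expectation EF (\<lambda>sx. measure_pmf.prob (map_pmf (\<lambda>C. (C, sx)) R) {(C, sx). failC k M ds dx C sx})"
    by (rule measure_bind_pmf_real)
  also have "\<dots> = measure_pmf.expectation EF (\<lambda>sx. Gt (tcount sx))"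
  proof (rule integral_cong_AE)
    show "AE sx in measure_pmf EF. measure_pmf.prob (map_pmf (\<lambda>C. (C, sx)) R) {(C, sx). failC k M ds dx C sx} = Gt (tcount sx)"
      unfolding AE_measure_pmf_iff
    proof
      fix sx assume sx: "sx \<in> set_pmf EF"
      show "measure_pmf.prob (map_pmf (\<lambda>C. (C, sx)) R) {(C, sx). failC k M ds dx C sx} = Gt (tcount sx)"
        using prob_fix_sx[OF sx[unfolded EF_def] ds dx assms(4)] by (simp add: vimage_def R_def Gt_def)
    qed
  qed auto
  also have "\<dots> = measure_pmf.expectation (map_pmf tcount EF) Gt" by simp
  also have "map_pmf tcount EF = binomial_pmf k \<delta>" unfolding EF_def by (rule map_tcount[OF assms(1,2)])
  also have "measure_pmf.expectation (binomial_pmf k \<delta>) Gt = (\<Sum>t\<le>k. pmf (binomial_pmf k \<delta>) t *\<^sub>R Gt t)"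
  proof (rule integral_measure_pmf)
    fix t assume "t \<in> set_pmf (binomial_pmf k \<delta>)"
    then show "t \<in> {..k}" using assms(1,2) by (auto simp: set_pmf_binomial_eq split: if_splits)
  qed auto
  also have "\<dots> = (\<Sum>t=0..k. binopmf t k \<delta> * Gt t)"
    using assms(1,2) by (simp add: binopmf_def atLeast0AtMost)
  finally have EQ: "measure_pmf.expectation R ex = (\<Sum>t=0..k. binopmf t k \<delta> * Gt t)" .
  have "\<exists>C\<in>set_pmf R. ex C \<le> measure_pmf.expectation R ex"
  proof (rule exists_le_expectation)
    show "finite (set_pmf R)" unfolding R_def by (rule finite_set_cbR)
    show "\<bar>ex C\<bar> \<le> 1" for C unfolding ex by simp
  qed
  then obtain C where "ex C \<le> (\<Sum>t=0..k. binopmf t k \<delta> * Gt t)" using EQ by auto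
  then show ?thesis
    unfolding is_code_def Gt_def ex_def using valid_encdec[OF assms(4)] by blast
qed


end
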